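(* In the push-based remote estimation problem described in the context, the policy that minimizes the communication cost while guaranteeing perfect state estimation at the decoder (i.e., the decoder's belief over $s_t$ is a point mass, $\boldsymbol{\omega}_t\in\{\mathbf{e}_1,\dots,\mathbf{e}_{|\mathcal{S}|}\}$, at every time $t$) sends a message at time $t$ if and only if the current state realization $s_t$ does not correspond to the state of maximum pre-communication belief, i.e., iff $s_t\neq\arg\max_{s\in\mathcal{S}}P_{s_{t-1},s}$.
   Context: Remote estimation problem: finite state set $\mathcal{S}$, a Markov chain with a fixed transition matrix $\mathbf{P}$ ($P_{s,s'}$ the probability of moving from $s$ to $s'$), unaffected by the decoder's actions. At each time $t$ an encoder observes $s_t$ and decides $c_t\in\{0,1\}$; the decoder observes $s_t$ if $c_t=1$ and a no-transmission symbol otherwise, and outputs an estimate $a_t\in\mathcal{S}$, receiving reward $1$ if $a_t=s_t$ and $0$ otherwise; each transmission costs $\beta>0$, and costs/rewards are discounted by $\gamma\in[0,1)$. The decoder knows the encoder's policy and updates its belief over $s_t$ by Bayes' rule, including conditioning on the fact that no transmission occurred. If the decoder knows $s_{t-1}$ exactly, its pre-communication belief over $s_t$ is $\mathbf{P}^{\top}\mathbf{e}_{s_{t-1}}$, i.e., the row $P_{s_{t-1},\cdot}$; $\mathbf{e}_i$ denotes the $i$-th standard basis vector of length $|\mathcal{S}|$. *)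

theory Defs
  imports Complex_Main
begin

text \<open>
The state space is a finite type 's; P i j is the transition probability
from i to j. s0 is the state s_{-1}, known exactly to the decoder at the start.
A (general, history-dependent) encoder policy is c :: 's list => 's => bool:
c h s = True means "transmit at time t", where h = [s_{-1}, s_0, ..., s_{t-1}]
is the state history and s = s_t is the current state.
\<close>

definition stochastic :: "('s::finite \<Rightarrow> 's \<Rightarrow> real) \<Rightarrow> bool" where
  "stochastic P \<longleftrightarrow> (\<forall>i j. 0 \<le> P i j) \<and> (\<forall>i. (\<Sum>j\<in>UNIV. P i j) = 1)"

fun path_prob :: "('s \<Rightarrow> 's \<Rightarrow> real) \<Rightarrow> 's \<Rightarrow> 's list \<Rightarrow> real" where
  "path_prob P prev [] = 1"
| "path_prob P prev (x # xs) = P prev x * path_prob P x xs"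

definition silent_mass :: "('s::finite \<Rightarrow> 's \<Rightarrow> real) \<Rightarrow> ('s list \<Rightarrow> 's \<Rightarrow> bool) \<Rightarrow> 's list \<Rightarrow> real" where
  "silent_mass P c h = (\<Sum>j\<in>UNIV. if c h j then 0 else P (last h) j)"

definition silent_posterior :: "('s::finite \<Rightarrow> 's \<Rightarrow> real) \<Rightarrow> ('s list \<Rightarrow> 's \<Rightarrow> bool) \<Rightarrow> 's list \<Rightarrow> 's \<Rightarrow> real" where
  "silent_posterior P c h j = (if c h j then 0 else P (last h) j) / silent_mass P c h"

text \<open>After a transmission this is automatic; after no
  transmission (when this event has positive probability) the posterior must be some e_k.\<close>
definition perfect_estimation :: "('s::finite \<Rightarrow> 's \<Rightarrow> real) \<Rightarrow> 's \<Rightarrow> ('s list \<Rightarrow> 's \<Rightarrow> bool) \<Rightarrow> bool" where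
  "perfect_estimation P s0 c \<longleftrightarrow>
     (\<forall>xs. path_prob P s0 xs > 0 \<and> silent_mass P c (s0 # xs) > 0 \<longrightarrow>
        (\<exists>k. \<forall>j. silent_posterior P c (s0 # xs) j = (if j = k then 1 else 0)))"

definition comm_cost :: "('s::finite \<Rightarrow> 's \<Rightarrow> real) \<Rightarrow> 's \<Rightarrow> real \<Rightarrow> real \<Rightarrow> ('s list \<Rightarrow> 's \<Rightarrow> bool) \<Rightarrow> real" where
  "comm_cost P s0 \<gamma> \<beta> c =
     (\<Sum>t. \<gamma> ^ t * \<beta> *
        (\<Sum>xs\<in>{xs::'s list. length xs = t}.
           path_prob P s0 xs * (\<Sum>j\<in>UNIV. if c (s0 # xs) j then P (last (s0 # xs)) j else 0)))"

end

theory Submission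
  imports Defs
begin

lemma pp_nonneg: "stochastic P \<Longrightarrow> 0 \<le> path_prob P s xs"
  by (induction xs arbitrary: s) (auto simp: stochastic_def)

lemma pp_sum: 
  fixes P :: "'s::finite \<Rightarrow> 's \<Rightarrow> real"
  assumes "stochastic P"
  shows "(\<Sum>xs\<in>{xs::'s list. length xs = t}. path_prob P s xs) = 1"
proof (induction t arbitrary: s)
  case 0
  then show ?case by simp
next
  case (Suc t)
  have eq: "{xs::'s list. length xs = Suc t} = (\<lambda>(x,xs). x#xs) ` (UNIV \<times> {xs. length xs = t})"
    by (auto simp: image_iff length_Suc_conv)
  have inj: "inj_on (\<lambda>(x,xs). x#xs) (UNIV \<times> {xs::'s list. length xs = t})"
    by (auto simp: inj_on_def)
  have "(\<Sum>xs\<in>{xs::'s list. length xs = Suc t}. path_prob P s xs)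
      = (\<Sum>(x,xs)\<in>UNIV \<times> {xs::'s list. length xs = t}. P s x * path_prob P x xs)"
    unfolding eq by (subst sum.reindex[OF inj]) (simp add: case_prod_unfold)
  also have "\<dots> = (\<Sum>x\<in>UNIV. \<Sum>xs\<in>{xs::'s list. length xs = t}. P s x * path_prob P x xs)"
    by (rule sum.cartesian_product[symmetric])
  also have "\<dots> = (\<Sum>x\<in>UNIV. P s x)"
    by (simp add: sum_distrib_left[symmetric] Suc)
  also have "\<dots> = 1" using assms by (simp add: stochastic_def)
  finally show ?case .
qed

lemma sum_pick: "(\<Sum>j\<in>(UNIV::'s::finite set). if j \<noteq> a then 0 else (f j::real)) = f a"
proof -
  have "(\<Sum>j\<in>(UNIV::'s set). if j \<noteq> a then 0 else f j) = (\<Sum>j\<in>UNIV. if a = j then f a else 0)"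
    by (intro sum.cong) auto
  then show ?thesis by simp
qed

lemma tx_bounds:
  fixes P :: "'s::finite \<Rightarrow> 's \<Rightarrow> real"
  assumes "stochastic P"
  shows "0 \<le> (\<Sum>j\<in>UNIV. if c j then P L j else 0)" "(\<Sum>j\<in>UNIV. if c j then P L j else 0) \<le> 1"
proof -
  show "0 \<le> (\<Sum>j\<in>UNIV. if c j then P L j else 0)"
    using assms by (intro sum_nonneg) (auto simp: stochastic_def)
  have "(\<Sum>j\<in>UNIV. if c j then P L j else 0) \<le> (\<Sum>j\<in>UNIV. P L j)"
    using assms by (intro sum_mono) (auto simp: stochastic_def)
  then show "(\<Sum>j\<in>UNIV. if c j then P L j else 0) \<le> 1" using assms by (simp add: stochastic_def)
qed

lemma tx_split:
  fixes P :: "'s::finite \<Rightarrow> 's \<Rightarrow> real"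
  assumes "stochastic P"
  shows "(\<Sum>j\<in>UNIV. if c j then P L j else 0) = 1 - (\<Sum>j\<in>UNIV. if c j then 0 else P L j)"
proof -
  have "(\<Sum>j\<in>UNIV. if c j then P L j else 0) + (\<Sum>j\<in>UNIV. if c j then 0 else P L j) = (\<Sum>j\<in>UNIV. P L j)"
    by (subst sum.distrib[symmetric]) (auto intro: sum.cong)
  then show ?thesis using assms by (simp add: stochastic_def)
qed

lemma per_hist:
  fixes P :: "'s::finite \<Rightarrow> 's \<Rightarrow> real"
  assumes st: "stochastic P" and mx: "\<And>i s. P i s \<le> P i (m i)"
    and pe: "silent_mass P c h > 0 \<Longrightarrow> (\<exists>k. \<forall>j. silent_posterior P c h j = (if j = k then 1 else 0))"
  shows "(\<Sum>j\<in>UNIV. if j \<noteq> m (last h) then P (last h) j else 0)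
       \<le> (\<Sum>j\<in>UNIV. if c h j then P (last h) j else 0)"
proof -
  let ?L = "last h"
  define g where "g j = (if c h j then 0 else P ?L j)" for j
  have sm: "silent_mass P c h = sum g UNIV" by (simp add: silent_mass_def g_def)
  have lhs: "(\<Sum>j\<in>UNIV. if j \<noteq> m ?L then P ?L j else 0) = 1 - P ?L (m ?L)"
    using tx_split[OF st, of "\<lambda>j. j \<noteq> m ?L" ?L] by (simp add: sum_pick)
  have rhs: "(\<Sum>j\<in>UNIV. if c h j then P ?L j else 0) = 1 - sum g UNIV"
    using tx_split[OF st, of "c h" ?L] by (simp add: g_def)
  have gnn: "0 \<le> g j" for j using st by (auto simp: g_def stochastic_def)
  have "sum g UNIV \<le> P ?L (m ?L)"
  proof (cases "silent_mass P c h > 0")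
    case True
    then obtain k where k: "\<And>j. silent_posterior P c h j = (if j = k then 1 else 0)"
      using pe by blast
    have "g j = 0" if "j \<noteq> k" for j
      using k[of j] that True by (simp add: silent_posterior_def g_def[symmetric] sm)
    then have "sum g UNIV = (\<Sum>j\<in>UNIV. if j = k then g k else 0)"
      by (intro sum.cong) auto
    also have "\<dots> = g k" by simp
    also have "\<dots> \<le> P ?L k" by (simp add: g_def st[unfolded stochastic_def])
    also have "\<dots> \<le> P ?L (m ?L)" by (rule mx)
    finally show ?thesis .
  next
    case False
    then have "sum g UNIV \<le> 0" using sm by simp
    moreover have "0 \<le> P ?L (m ?L)" using st by (simp add: stochastic_def)
    ultimately show ?thesis by linarith
  qed
  then show ?thesis using lhs rhs by linarith
qed

theorem theorem5:
  fixes P :: "'s::finite \<Rightarrow> 's \<Rightarrow> real" and s0 :: 's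
    and \<gamma> \<beta> :: real and m :: "'s \<Rightarrow> 's"
  assumes "stochastic P"
    and "\<beta> > 0" and "0 \<le> \<gamma>" and "\<gamma> < 1"
    and "\<And>i s. P i s \<le> P i (m i)"
  shows "perfect_estimation P s0 (\<lambda>h s. s \<noteq> m (last h)) \<and>
         (\<forall>c. perfect_estimation P s0 c \<longrightarrow>
              comm_cost P s0 \<gamma> \<beta> (\<lambda>h s. s \<noteq> m (last h)) \<le> comm_cost P s0 \<gamma> \<beta> c)"
proof
  note st = assms(1)
  show "perfect_estimation P s0 (\<lambda>h s. s \<noteq> m (last h))"
    unfolding perfect_estimation_def
  proof (intro allI impI)
    fix xs :: "'s list"
    let ?h = "s0 # xs"
    have sm: "silent_mass P (\<lambda>h s. s \<noteq> m (last h)) ?h = P (last ?h) (m (last ?h))"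
      unfolding silent_mass_def by (rule sum_pick)
    assume "0 < path_prob P s0 xs \<and> 0 < silent_mass P (\<lambda>h s. s \<noteq> m (last h)) ?h"
    then have pos: "P (last ?h) (m (last ?h)) > 0" using sm by simp
    show "\<exists>k. \<forall>j. silent_posterior P (\<lambda>h s. s \<noteq> m (last h)) ?h j = (if j = k then 1 else 0)"
    proof (rule exI[of _ "m (last ?h)"], rule allI)
      fix j
      show "silent_posterior P (\<lambda>h s. s \<noteq> m (last h)) ?h j = (if j = m (last ?h) then 1 else 0)"
        unfolding silent_posterior_def sm using pos
        by (cases "j = m (last ?h)") (simp_all del: last.simps)
    qed
  qed
  show "\<forall>c. perfect_estimation P s0 c \<longrightarrow>
          comm_cost P s0 \<gamma> \<beta> (\<lambda>h s. s \<noteq> m (last h)) \<le> comm_cost P s0 \<gamma> \<beta> c"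
  proof (intro allI impI)
    fix c assume pe: "perfect_estimation P s0 c"
    define F where "F c' t = \<gamma> ^ t * \<beta> *
        (\<Sum>xs\<in>{xs::'s list. length xs = t}.
           path_prob P s0 xs * (\<Sum>j\<in>UNIV. if c' (s0 # xs) j then P (last (s0 # xs)) j else 0))"
      for c' :: "'s list \<Rightarrow> 's \<Rightarrow> bool" and t
    have inner: "0 \<le> (\<Sum>xs\<in>{xs::'s list. length xs = t}.
           path_prob P s0 xs * (\<Sum>j\<in>UNIV. if c' (s0 # xs) j then P (last (s0 # xs)) j else 0))
        \<and> (\<Sum>xs\<in>{xs::'s list. length xs = t}.
           path_prob P s0 xs * (\<Sum>j\<in>UNIV. if c' (s0 # xs) j then P (last (s0 # xs)) j else 0)) \<le> 1"
      for c' :: "'s list \<Rightarrow> 's \<Rightarrow> bool" and t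
    proof
      show "0 \<le> (\<Sum>xs\<in>{xs::'s list. length xs = t}.
           path_prob P s0 xs * (\<Sum>j\<in>UNIV. if c' (s0 # xs) j then P (last (s0 # xs)) j else 0))"
        by (intro sum_nonneg mult_nonneg_nonneg pp_nonneg[OF st] tx_bounds(1)[OF st])
      have "(\<Sum>xs\<in>{xs::'s list. length xs = t}.
           path_prob P s0 xs * (\<Sum>j\<in>UNIV. if c' (s0 # xs) j then P (last (s0 # xs)) j else 0))
          \<le> (\<Sum>xs\<in>{xs::'s list. length xs = t}. path_prob P s0 xs)"
        by (intro sum_mono mult_right_le_one_le pp_nonneg[OF st] tx_bounds[OF st])
      then show "(\<Sum>xs\<in>{xs::'s list. length xs = t}.
           path_prob P s0 xs * (\<Sum>j\<in>UNIV. if c' (s0 # xs) j then P (last (s0 # xs)) j else 0)) \<le> 1"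
        using pp_sum[OF st] by simp
    qed
    have summ: "summable (F c')" for c'
    proof (rule summable_comparison_test[where g="\<lambda>t. \<beta> * \<gamma> ^ t"])
      show "summable (\<lambda>t. \<beta> * \<gamma> ^ t)"
        using assms by (intro summable_mult summable_geometric) simp
      show "\<exists>N. \<forall>n\<ge>N. norm (F c' n) \<le> \<beta> * \<gamma> ^ n"
      proof (intro exI allI impI)
        fix n
        have g0: "0 \<le> \<gamma> ^ n * \<beta>" using assms by simp
        have "norm (F c' n) = \<gamma> ^ n * \<beta> * (\<Sum>xs\<in>{xs::'s list. length xs = n}.
           path_prob P s0 xs * (\<Sum>j\<in>UNIV. if c' (s0 # xs) j then P (last (s0 # xs)) j else 0))"
          unfolding F_def using inner[of c' n] g0 by simp
        also have "\<dots> \<le> \<gamma> ^ n * \<beta> * 1"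
          using inner[of c' n] g0 by (intro mult_left_mono) auto
        finally show "norm (F c' n) \<le> \<beta> * \<gamma> ^ n" by (simp add: mult.commute)
      qed
    qed
    have "F (\<lambda>h s. s \<noteq> m (last h)) t \<le> F c t" for t
      unfolding F_def
    proof (rule mult_left_mono)
      show "0 \<le> \<gamma> ^ t * \<beta>" using assms by simp
      show "(\<Sum>xs\<in>{xs::'s list. length xs = t}. path_prob P s0 xs *
              (\<Sum>j\<in>UNIV. if j \<noteq> m (last (s0 # xs)) then P (last (s0 # xs)) j else 0))
          \<le> (\<Sum>xs\<in>{xs::'s list. length xs = t}. path_prob P s0 xs *
              (\<Sum>j\<in>UNIV. if c (s0 # xs) j then P (last (s0 # xs)) j else 0))"
      proof (rule sum_mono)
        fix xs :: "'s list"
        show "path_prob P s0 xs *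
              (\<Sum>j\<in>UNIV. if j \<noteq> m (last (s0 # xs)) then P (last (s0 # xs)) j else 0)
            \<le> path_prob P s0 xs *
              (\<Sum>j\<in>UNIV. if c (s0 # xs) j then P (last (s0 # xs)) j else 0)"
        proof (cases "path_prob P s0 xs > 0")
          case True
          have "(\<Sum>j\<in>UNIV. if j \<noteq> m (last (s0 # xs)) then P (last (s0 # xs)) j else 0)
              \<le> (\<Sum>j\<in>UNIV. if c (s0 # xs) j then P (last (s0 # xs)) j else 0)"
            by (rule per_hist[OF st assms(5)]) (use pe True in \<open>auto simp: perfect_estimation_def\<close>)
          then show ?thesis using True by (intro mult_left_mono) auto
        next
          case False
          then have "path_prob P s0 xs = 0" using pp_nonneg[OF st, of s0 xs] by linarith
          then show ?thesis by simp
        qed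
      qed
    qed
    then have "suminf (F (\<lambda>h s. s \<noteq> m (last h))) \<le> suminf (F c)"
      by (intro suminf_le summ)
    then show "comm_cost P s0 \<gamma> \<beta> (\<lambda>h s. s \<noteq> m (last h)) \<le> comm_cost P s0 \<gamma> \<beta> c"
      unfolding comm_cost_def F_def by simp
  qed
qed

end
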